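(* Let $(s_0,s_1,\dots)$ and $(\delta_0,\delta_1,\dots)$ be non-negative real sequences with $s_{k+1}\le\delta_k s_k+c$ for all $k$, where $c\ge0$, and $\sum_{t=0}^\infty\delta_t\le L$. Then for all $t$, $s_t\le e^{L}\left(e^{-t}s_0+c\frac{e}{e-1}\right)$. *)

theory Defs
  imports Complex_Main
begin

end

theory Submission
  imports Defs
begin

lemma le_exp_m1: "(x::real) \<le> exp (x - 1)"
  using exp_ge_add_one_self[of "x - 1"] by simp

theorem lemma3:
  fixes s \<delta> :: "nat \<Rightarrow> real" and c L :: real
  assumes "\<And>k. s k \<ge> 0"
    and "\<And>k. \<delta> k \<ge> 0"
    and "c \<ge> 0"
    and "\<And>k. s (Suc k) \<le> \<delta> k * s k + c"
    and "summable \<delta>"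
    and "(\<Sum>t. \<delta> t) \<le> L"
  shows "\<forall>t. s t \<le> exp L * (exp (- real t) * s 0 + c * (exp 1 / (exp 1 - 1)))"
proof
  fix t
  define S where "S k = (\<Sum>i<k. \<delta> i)" for k
  define q where "q = exp 1 / (exp (1::real) - 1)"
  have e1: "exp (1::real) > 1" by simp
  have qpos: "q > 0" unfolding q_def using e1 by simp
  have Snn: "S k \<ge> 0" for k unfolding S_def using assms(2) by (simp add: sum_nonneg)
  have SL: "S k \<le> L" for k
    unfolding S_def using sum_le_suminf[OF assms(5), of "{..<k}"] assms(2,6) by auto
  have inv: "s n \<le> exp (S n - real n) * s 0 + c * exp (S n) * q" for n
  proof (induction n)
    case 0
    then show ?case using assms(3) qpos by (simp add: S_def)
  next
    case (Suc n)
    have SS: "S (Suc n) = S n + \<delta> n" by (simp add: S_def)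
    have d: "\<delta> n \<le> exp (\<delta> n - 1)" by (rule le_exp_m1)
    have A: "\<delta> n * exp (S n - real n) \<le> exp (S (Suc n) - real (Suc n))"
    proof -
      have "\<delta> n * exp (S n - real n) \<le> exp (\<delta> n - 1) * exp (S n - real n)"
        using d by (intro mult_right_mono) auto
      also have "\<dots> = exp (S (Suc n) - real (Suc n))" by (simp add: SS exp_add[symmetric])
      finally show ?thesis .
    qed
    have B: "\<delta> n * exp (S n) \<le> exp (S (Suc n)) / exp 1"
    proof -
      have "\<delta> n * exp (S n) \<le> exp (\<delta> n - 1) * exp (S n)"
        using d by (intro mult_right_mono) auto
      also have "\<dots> = exp (S (Suc n)) / exp 1" by (simp add: SS exp_add[symmetric] exp_diff)
      finally show ?thesis .
    qed
    have C: "exp (S (Suc n)) / exp 1 * q + 1 \<le> exp (S (Suc n)) * q"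
    proof -
      have "exp (S (Suc n)) \<ge> 1" using Snn by simp
      moreover have "exp (S (Suc n)) * q - exp (S (Suc n)) / exp 1 * q = exp (S (Suc n))"
      proof -
        have g: "E * (a / (a - 1)) - E / a * (a / (a - 1)) = E" if "a > 1" for E a :: real
        proof -
          have "E / a * (a / (a - 1)) = E / (a - 1)" using that by simp
          moreover have "E * (a / (a - 1)) = (E * a) / (a - 1)" by simp
          moreover have "(E * a) / (a - 1) - E / (a - 1) = (E * a - E) / (a - 1)"
            by (simp add: diff_divide_distrib)
          moreover have "E * a - E = E * (a - 1)" by (simp add: algebra_simps)
          ultimately have "E * (a / (a - 1)) - E / a * (a / (a - 1)) = E * (a - 1) / (a - 1)"
            by (metis (no_types))
          also have "\<dots> = E" using that by simp
          finally show ?thesis .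
        qed
        show ?thesis unfolding q_def using g[OF e1] .
      qed
      ultimately show ?thesis by linarith
    qed
    have "s (Suc n) \<le> \<delta> n * s n + c" by (rule assms(4))
    also have "\<dots> \<le> \<delta> n * (exp (S n - real n) * s 0 + c * exp (S n) * q) + c"
      using Suc assms(2) by (intro add_right_mono mult_left_mono) auto
    also have "\<dots> = (\<delta> n * exp (S n - real n)) * s 0 + c * ((\<delta> n * exp (S n)) * q + 1)"
      by (simp add: algebra_simps)
    also have "\<dots> \<le> exp (S (Suc n) - real (Suc n)) * s 0 + c * (exp (S (Suc n)) / exp 1 * q + 1)"
      using A B assms(1,3) qpos
      by (intro add_mono mult_right_mono mult_left_mono) auto
    also have "\<dots> \<le> exp (S (Suc n) - real (Suc n)) * s 0 + c * (exp (S (Suc n)) * q)"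
      using C assms(3) by (intro add_left_mono mult_left_mono) auto
    finally show ?case by (simp add: mult.assoc)
  qed
  have "s t \<le> exp (S t - real t) * s 0 + c * exp (S t) * q" by (rule inv)
  also have "\<dots> \<le> exp (L - real t) * s 0 + c * exp L * q"
    using SL[of t] assms(1,3) qpos
    by (intro add_mono mult_right_mono mult_left_mono) auto
  also have "\<dots> = exp L * (exp (- real t) * s 0 + c * q)"
    by (simp add: algebra_simps exp_diff exp_minus field_simps)
  finally show "s t \<le> exp L * (exp (- real t) * s 0 + c * (exp 1 / (exp 1 - 1)))"
    by (simp add: q_def)
qed

end
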